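(* For natural concepts $C_1,C_2,C_3,D_1,D_2,D_3,E_1,E_2$: (a) $\{C_1:C_2::D_1:D_2,\ D_1:D_2::E_1:E_2\}\models C_1:C_2::E_1:E_2$; (b) $\{C_1:C_2::D_1:D_2,\ C_2:C_3::D_2:D_3\}\models C_1:C_3::D_1:D_3$.
   Context: Concepts: $C,D::=\top\mid\bot\mid A\mid C\sqcap D\mid \exists r.C\mid N$; natural concepts: $N,N'::=A'\mid N\sqcap N'\mid N\bowtie N'\mid \exists r'.N$, with $A$ a concept name, $A'$ a natural concept name, $r$ a role name, $r'$ an intra-domain role name. A domain constrained interpretation is $\mathfrak{I}=(\mathcal{I},[\mathcal{F}_1,\dots,\mathcal{F}_k],\mathcal{X},\pi,\sim,\mathcal{S})$ where $\mathcal{I}=(\Delta^{\mathcal{I}},\cdot^{\mathcal{I}})$ is a classical DL interpretation, $[\mathcal{F}_1,\dots,\mathcal{F}_k]$ partitions a nonempty finite set $\mathcal{F}$, $\mathcal{X}\subseteq2^{\mathcal{F}}$ with $\mathcal{F}\in\mathcal{X}$, $\pi:\Delta^{\mathcal{I}}\to2^{\mathcal{F}}$, $\sim$ an equivalence relation on $\{1,\dots,k\}$, $\mathcal{S}=\{\sigma_{(s,t)}\mid(s,t)\in\sim\}$ with $\sigma_{(s,t)}:\mathcal{F}_s\to\mathcal{F}_t$ bijections. With $\mathcal{C}=\{G\subseteq\mathcal{F}\mid X\not\subseteq G\ \forall X\in\mathcal{X}\}$ and $\mathcal{C}^i=\{G\in\mathcal{C}\mid G\subseteq\mathcal{F}_i\}$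 it is required: (1) $X\not\subseteq\pi(d)$ for all $d$, $X\in\mathcal{X}$; (2) each $G\in\mathcal{C}$ is $\pi(d)$ for some $d$; (3) $\sigma_{(s,t)}^{-1}=\sigma_{(t,s)}$, $\sigma_{(t,u)}\circ\sigma_{(s,t)}=\sigma_{(s,u)}$; (4) $\sigma_{(i,j)}(G)\in\mathcal{C}$ for $G\in\mathcal{C}^i$, $(i,j)\in\sim$; (5) $\{f,g\}\in\mathcal{X}$ whenever $f\in\mathcal{F}_i$, $g\in\mathcal{F}_j$, $(i,j)\in\sim$, $i\neq j$. $\varphi(C)=\bigcap\{\pi(d)\mid d\in C^{\mathcal{I}}\}$ ($=\mathcal{F}$ if $C^{\mathcal{I}}=\emptyset$). Concepts are interpreted as usual, with $(N\bowtie N')^{\mathcal{I}}=\{d\mid\varphi(N)\cap\varphi(N')\subseteq\pi(d)\}$. An intra-domain relation $r$: there is $\kappa_r:2^{\mathcal{F}}\to2^{\mathcal{F}}$ with $(\exists r.C)^{\mathcal{I}}=\{d\mid\kappa_r(\varphi(C))\subseteq\pi(d)\}$ for all $C$, $\kappa_r(G)=\bigcup_i\kappa_r(G\cap\mathcal{F}_i)$ for $G\in\mathcal{C}$, $\kappa_r(G)\subseteq\mathcal{F}_i$ for $G\in\mathcal{C}^i$, $\kappa_r(\sigma_{(i,j)}(G))=\sigma_{(i,j)}(\kappa_r(G))$ for $(i,j)\in\sim$, $G\in\mathcal{C}^i$, and $\kappa_r(G)\neq\emptyset$ for $G\in\mathcal{C}^i\setminus\{\emptyset\}$. $\delta(C)=\{i\mid\mathcal{F}_i\cap\varphi(C)\neq\emptyset\}$.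 For $U=\{(s_1,t_1),\dots,(s_l,t_l)\}\subseteq\sim$ with pairwise distinct $s_i$ and pairwise distinct $t_i$, the domain translation $\sigma_U:\mathcal{F}\to\mathcal{F}$ maps $f\in\mathcal{F}_{s_i}$ to $\sigma_{(s_i,t_i)}(f)$ and fixes all other features; $\mathrm{src}(U)=\{s_i\}$, $\mathrm{tgt}(U)=\{t_i\}$. $\mu(C,D)$ is the set of $\sigma_U$ with $\varphi(D)=\sigma_U(\varphi(C))$, $\mathrm{src}(U)\subseteq\delta(C)$, $\mathrm{tgt}(U)\cap(\delta(C)\setminus\mathrm{src}(U))=\emptyset$. An analogy assertion $C_1:C_2::D_1:D_2$ (between natural concepts) is satisfied in $\mathfrak{I}$ iff $\mu(C_1,C_2)\cap\mu(D_1,D_2)\neq\emptyset$; a concept inclusion $C\sqsubseteq D$ is satisfied iff $C^{\mathcal{I}}\subseteq D^{\mathcal{I}}$. A TBox is a finite set of concept inclusions and analogy assertions. $\mathfrak{I}$ is a model of a TBox $\mathcal{T}$ if it satisfies all its elements, every natural concept $N$ in $\mathcal{T}$ satisfies $N^{\mathcal{I}}=\{d\mid\varphi(N)\subseteq\pi(d)\}$, and every intra-domain role name is interpreted as an intra-domain relation. $\mathcal{T}\models\psi$ means every model of $\mathcal{T}$ satisfies $\psi$. *)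

theory Defs
  imports Main
begin

text \<open>Concepts over concept names of type 'c and role names of type 'r.
  The constructor Bowtie is only meant to occur inside natural concepts
  (see the predicates natural and wf_concept below).\<close>

datatype ('c, 'r) concept =
    Top
  | Bot
  | Atom 'c
  | And "('c, 'r) concept" "('c, 'r) concept"
  | Ex 'r "('c, 'r) concept"
  | Bowtie "('c, 'r) concept" "('c, 'r) concept"

text \<open>Natural concepts, relative to the set NCN of natural concept names and the
  set IR of intra-domain role names.\<close>

inductive natural :: "'c set \<Rightarrow> 'r set \<Rightarrow> ('c, 'r) concept \<Rightarrow> bool"
  for NCN IR where
  nat_atom: "A \<in> NCN \<Longrightarrow> natural NCN IR (Atom A)"
| nat_and: "natural NCN IR N \<Longrightarrow> natural NCN IR N' \<Longrightarrow> natural NCN IR (And N N')"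
| nat_bowtie: "natural NCN IR N \<Longrightarrow> natural NCN IR N' \<Longrightarrow> natural NCN IR (Bowtie N N')"
| nat_ex: "r \<in> IR \<Longrightarrow> natural NCN IR N \<Longrightarrow> natural NCN IR (Ex r N)"

inductive wf_concept :: "'c set \<Rightarrow> 'r set \<Rightarrow> ('c, 'r) concept \<Rightarrow> bool"
  for NCN IR where
  wf_top: "wf_concept NCN IR Top"
| wf_bot: "wf_concept NCN IR Bot"
| wf_atom: "wf_concept NCN IR (Atom A)"
| wf_and: "wf_concept NCN IR C \<Longrightarrow> wf_concept NCN IR D \<Longrightarrow> wf_concept NCN IR (And C D)"
| wf_ex: "wf_concept NCN IR C \<Longrightarrow> wf_concept NCN IR (Ex r C)"
| wf_nat: "natural NCN IR N \<Longrightarrow> wf_concept NCN IR N"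

fun subconcepts :: "('c, 'r) concept \<Rightarrow> ('c, 'r) concept set" where
  "subconcepts Top = {Top}"
| "subconcepts Bot = {Bot}"
| "subconcepts (Atom A) = {Atom A}"
| "subconcepts (And C D) = insert (And C D) (subconcepts C \<union> subconcepts D)"
| "subconcepts (Ex r C) = insert (Ex r C) (subconcepts C)"
| "subconcepts (Bowtie C D) = insert (Bowtie C D) (subconcepts C \<union> subconcepts D)"

datatype ('c, 'r) axiom =
    Incl "('c, 'r) concept" "('c, 'r) concept"
  | Analogy "('c, 'r) concept" "('c, 'r) concept" "('c, 'r) concept" "('c, 'r) concept"

fun axiom_concepts :: "('c, 'r) axiom \<Rightarrow> ('c, 'r) concept set" where
  "axiom_concepts (Incl C D) = subconcepts C \<union> subconcepts D"
| "axiom_concepts (Analogy C1 C2 D1 D2) =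
     subconcepts C1 \<union> subconcepts C2 \<union> subconcepts D1 \<union> subconcepts D2"

fun wf_axiom :: "'c set \<Rightarrow> 'r set \<Rightarrow> ('c, 'r) axiom \<Rightarrow> bool" where
  "wf_axiom NCN IR (Incl C D) = (wf_concept NCN IR C \<and> wf_concept NCN IR D)"
| "wf_axiom NCN IR (Analogy C1 C2 D1 D2) =
     (natural NCN IR C1 \<and> natural NCN IR C2 \<and> natural NCN IR D1 \<and> natural NCN IR D2)"

definition wf_tbox :: "'c set \<Rightarrow> 'r set \<Rightarrow> ('c, 'r) axiom set \<Rightarrow> bool" where
  "wf_tbox NCN IR T \<longleftrightarrow> finite T \<and> (\<forall>ax\<in>T. wf_axiom NCN IR ax)"

text \<open>The partition
  [F_1,...,F_k] is given by k and part :: nat => 'f set (indices 1..k);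
  sim is the equivalence relation on {1..k}; sig s t is sigma_(s,t).\<close>

record ('d, 'f, 'c, 'r) dci =
  dom :: "'d set"
  cint :: "'c \<Rightarrow> 'd set"
  rint :: "'r \<Rightarrow> ('d \<times> 'd) set"
  feats :: "'f set"
  nparts :: nat
  part :: "nat \<Rightarrow> 'f set"
  excl :: "'f set set"
  pi :: "'d \<Rightarrow> 'f set"
  sim :: "(nat \<times> nat) set"
  sig :: "nat \<Rightarrow> nat \<Rightarrow> 'f \<Rightarrow> 'f"

definition idx :: "('d, 'f, 'c, 'r) dci \<Rightarrow> nat set" where
  "idx I = {1..nparts I}"

definition consistent :: "('d, 'f, 'c, 'r) dci \<Rightarrow> 'f set set" where
  "consistent I = {G. G \<subseteq> feats I \<and> (\<forall>X\<in>excl I. \<not> X \<subseteq> G)}"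

definition consistent_in :: "('d, 'f, 'c, 'r) dci \<Rightarrow> nat \<Rightarrow> 'f set set" where
  "consistent_in I i = {G \<in> consistent I. G \<subseteq> part I i}"

definition is_dci :: "('d, 'f, 'c, 'r) dci \<Rightarrow> bool" where
  "is_dci I \<longleftrightarrow>
     \<comment> \<open>classical interpretation\<close>
     dom I \<noteq> {} \<and> (\<forall>A. cint I A \<subseteq> dom I) \<and> (\<forall>r. rint I r \<subseteq> dom I \<times> dom I) \<and>
     \<comment> \<open>F nonempty finite, partitioned into F_1..F_k\<close>
     finite (feats I) \<and> feats I \<noteq> {} \<and>
     (\<forall>i\<in>idx I. part I i \<noteq> {}) \<and>
     (\<forall>i\<in>idx I. \<forall>j\<in>idx I. i \<noteq> j \<longrightarrow> part I i \<inter> part I j = {}) \<and>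
     (\<Union>i\<in>idx I. part I i) = feats I \<and>
     \<comment> \<open>X a set of subsets of F containing F\<close>
     excl I \<subseteq> Pow (feats I) \<and> feats I \<in> excl I \<and>
     \<comment> \<open>pi maps into 2^F\<close>
     (\<forall>d\<in>dom I. pi I d \<subseteq> feats I) \<and>
     \<comment> \<open>sim an equivalence relation on {1..k}; sigmas bijections\<close>
     equiv (idx I) (sim I) \<and>
     (\<forall>(s, t)\<in>sim I. bij_betw (sig I s t) (part I s) (part I t)) \<and>
     \<comment> \<open>(1)\<close>
     (\<forall>d\<in>dom I. \<forall>X\<in>excl I. \<not> X \<subseteq> pi I d) \<and>
     \<comment> \<open>(2)\<close>
     (\<forall>G\<in>consistent I. \<exists>d\<in>dom I. pi I d = G) \<and>
     \<comment> \<open>(3)\<close>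
     (\<forall>(s, t)\<in>sim I. \<forall>f\<in>part I s. sig I t s (sig I s t f) = f) \<and>
     (\<forall>(s, t)\<in>sim I. \<forall>u. (t, u) \<in> sim I \<longrightarrow>
        (\<forall>f\<in>part I s. sig I t u (sig I s t f) = sig I s u f)) \<and>
     \<comment> \<open>(4)\<close>
     (\<forall>(i, j)\<in>sim I. \<forall>G\<in>consistent_in I i. sig I i j ` G \<in> consistent I) \<and>
     \<comment> \<open>(5)\<close>
     (\<forall>(i, j)\<in>sim I. i \<noteq> j \<longrightarrow>
        (\<forall>f\<in>part I i. \<forall>g\<in>part I j. {f, g} \<in> excl I))"

definition phiS :: "('d, 'f, 'c, 'r) dci \<Rightarrow> 'd set \<Rightarrow> 'f set" where
  "phiS I S = (if S = {} then feats I else \<Inter>(pi I ` S))"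

fun ext :: "('d, 'f, 'c, 'r) dci \<Rightarrow> ('c, 'r) concept \<Rightarrow> 'd set" where
  "ext I Top = dom I"
| "ext I Bot = {}"
| "ext I (Atom A) = cint I A"
| "ext I (And C D) = ext I C \<inter> ext I D"
| "ext I (Ex r C) = {d \<in> dom I. \<exists>e. (d, e) \<in> rint I r \<and> e \<in> ext I C}"
| "ext I (Bowtie N N') =
     {d \<in> dom I. phiS I (ext I N) \<inter> phiS I (ext I N') \<subseteq> pi I d}"

definition phi :: "('d, 'f, 'c, 'r) dci \<Rightarrow> ('c, 'r) concept \<Rightarrow> 'f set" where
  "phi I C = phiS I (ext I C)"

definition intra_domain ::
  "'c set \<Rightarrow> 'r set \<Rightarrow> ('d, 'f, 'c, 'r) dci \<Rightarrow> 'r \<Rightarrow> bool" where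
  "intra_domain NCN IR I r \<longleftrightarrow>
     (\<exists>\<kappa> :: 'f set \<Rightarrow> 'f set.
        (\<forall>C. wf_concept NCN IR C \<longrightarrow>
           ext I (Ex r C) = {d \<in> dom I. \<kappa> (phi I C) \<subseteq> pi I d}) \<and>
        (\<forall>G\<in>consistent I. \<kappa> G = (\<Union>i\<in>idx I. \<kappa> (G \<inter> part I i))) \<and>
        (\<forall>i\<in>idx I. \<forall>G\<in>consistent_in I i. \<kappa> G \<subseteq> part I i) \<and>
        (\<forall>(i, j)\<in>sim I. \<forall>G\<in>consistent_in I i.
           \<kappa> (sig I i j ` G) = sig I i j ` (\<kappa> G)) \<and>
        (\<forall>i\<in>idx I. \<forall>G\<in>consistent_in I i - {{}}. \<kappa> G \<noteq> {}))"

definition delta :: "('d, 'f, 'c, 'r) dci \<Rightarrow> ('c, 'r) concept \<Rightarrow> nat set" where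
  "delta I C = {i \<in> idx I. part I i \<inter> phi I C \<noteq> {}}"

definition admissible :: "('d, 'f, 'c, 'r) dci \<Rightarrow> (nat \<times> nat) set \<Rightarrow> bool" where
  "admissible I U \<longleftrightarrow> U \<subseteq> sim I \<and> inj_on fst U \<and> inj_on snd U"

definition transl :: "('d, 'f, 'c, 'r) dci \<Rightarrow> (nat \<times> nat) set \<Rightarrow> 'f \<Rightarrow> 'f" where
  "transl I U f =
     (if \<exists>p\<in>U. f \<in> part I (fst p)
      then (let p = (SOME p. p \<in> U \<and> f \<in> part I (fst p)) in sig I (fst p) (snd p) f)
      else f)"

definition mu :: "('d, 'f, 'c, 'r) dci \<Rightarrow> ('c, 'r) concept \<Rightarrow> ('c, 'r) concept
                   \<Rightarrow> ('f \<Rightarrow> 'f) set" where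
  "mu I C D = {transl I U | U. admissible I U \<and>
                 phi I D = transl I U ` phi I C \<and>
                 fst ` U \<subseteq> delta I C \<and>
                 snd ` U \<inter> (delta I C - fst ` U) = {}}"

fun sat :: "('d, 'f, 'c, 'r) dci \<Rightarrow> ('c, 'r) axiom \<Rightarrow> bool" where
  "sat I (Incl C D) = (ext I C \<subseteq> ext I D)"
| "sat I (Analogy C1 C2 D1 D2) = (mu I C1 C2 \<inter> mu I D1 D2 \<noteq> {})"

definition is_model ::
  "'c set \<Rightarrow> 'r set \<Rightarrow> ('c, 'r) axiom set \<Rightarrow> ('d, 'f, 'c, 'r) dci \<Rightarrow> bool" where
  "is_model NCN IR T I \<longleftrightarrow>
     is_dci I \<and>
     (\<forall>ax\<in>T. sat I ax) \<and>
     (\<forall>ax\<in>T. \<forall>N\<in>axiom_concepts ax. natural NCN IR N \<longrightarrow>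
        ext I N = {d \<in> dom I. phi I N \<subseteq> pi I d}) \<and>
     (\<forall>r\<in>IR. intra_domain NCN IR I r)"

text \<open>Entailment.  The domain type 'd and feature type 'f are fixed inside the
  formula; a theorem about entails with free type variables holds for all of
  them, i.e. for all models.\<close>

definition entails ::
  "'c set \<Rightarrow> 'r set \<Rightarrow> ('c, 'r) axiom set \<Rightarrow> ('c, 'r) axiom \<Rightarrow>
   ('d \<times> 'f) itself \<Rightarrow> bool" where
  "entails NCN IR T ax _ \<longleftrightarrow>
     (\<forall>I :: ('d, 'f, 'c, 'r) dci. is_model NCN IR T I \<longrightarrow> sat I ax)"

end

theory Submission
  imports Defs
begin


lemma P_parts_ne: "is_dci I \<Longrightarrow> (\<forall>i\<in>idx I. part I i \<noteq> {})"
  unfolding is_dci_def by (elim conjE) assumption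
lemma P_disj: "is_dci I \<Longrightarrow> (\<forall>i\<in>idx I. \<forall>j\<in>idx I. i \<noteq> j \<longrightarrow> part I i \<inter> part I j = {})"
  unfolding is_dci_def by (elim conjE) assumption
lemma dci_union: "is_dci I \<Longrightarrow> (\<Union>i\<in>idx I. part I i) = feats I"
  unfolding is_dci_def by (elim conjE) assumption
lemma dci_feats_excl: "is_dci I \<Longrightarrow> feats I \<in> excl I"
  unfolding is_dci_def by (elim conjE) assumption
lemma dci_finite: "is_dci I \<Longrightarrow> finite (feats I)"
  unfolding is_dci_def by (elim conjE) assumption
lemma P_pi: "is_dci I \<Longrightarrow> (\<forall>d\<in>dom I. pi I d \<subseteq> feats I)"
  unfolding is_dci_def by (elim conjE) assumption
lemma P_cint: "is_dci I \<Longrightarrow> (\<forall>A. cint I A \<subseteq> dom I)"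
  unfolding is_dci_def by (elim conjE) assumption
lemma dci_equiv: "is_dci I \<Longrightarrow> equiv (idx I) (sim I)"
  unfolding is_dci_def by (elim conjE) assumption
lemma P_bij: "is_dci I \<Longrightarrow> (\<forall>(s, t)\<in>sim I. bij_betw (sig I s t) (part I s) (part I t))"
  unfolding is_dci_def by (elim conjE) assumption
lemma P_1: "is_dci I \<Longrightarrow> (\<forall>d\<in>dom I. \<forall>X\<in>excl I. \<not> X \<subseteq> pi I d)"
  unfolding is_dci_def by (elim conjE) assumption
lemma P_3b: "is_dci I \<Longrightarrow> (\<forall>(s, t)\<in>sim I. \<forall>u. (t, u) \<in> sim I \<longrightarrow>
        (\<forall>f\<in>part I s. sig I t u (sig I s t f) = sig I s u f))"
  unfolding is_dci_def by (elim conjE) assumption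
lemma P_5: "is_dci I \<Longrightarrow> (\<forall>(i, j)\<in>sim I. i \<noteq> j \<longrightarrow>
        (\<forall>f\<in>part I i. \<forall>g\<in>part I j. {f, g} \<in> excl I))"
  unfolding is_dci_def by (elim conjE) assumption

lemma dci_parts_ne: "is_dci I \<Longrightarrow> i \<in> idx I \<Longrightarrow> part I i \<noteq> {}"
  using P_parts_ne[of I] by blast
lemma dci_disj: "is_dci I \<Longrightarrow> i \<in> idx I \<Longrightarrow> j \<in> idx I \<Longrightarrow> f \<in> part I i \<Longrightarrow> f \<in> part I j \<Longrightarrow> i = j"
  using P_disj[of I] by blast
lemma dci_pi: "is_dci I \<Longrightarrow> d \<in> dom I \<Longrightarrow> pi I d \<subseteq> feats I"
  using P_pi[of I] by blast
lemma dci_cint: "is_dci I \<Longrightarrow> cint I A \<subseteq> dom I"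
  using P_cint[of I] by blast
lemma dci_bij: "is_dci I \<Longrightarrow> (s, t) \<in> sim I \<Longrightarrow> bij_betw (sig I s t) (part I s) (part I t)"
  using P_bij[of I] by blast
lemma dci_1: "is_dci I \<Longrightarrow> d \<in> dom I \<Longrightarrow> X \<in> excl I \<Longrightarrow> \<not> X \<subseteq> pi I d"
  using P_1[of I] by blast
lemma dci_3b: "is_dci I \<Longrightarrow> (s, t) \<in> sim I \<Longrightarrow> (t, u) \<in> sim I \<Longrightarrow> f \<in> part I s \<Longrightarrow>
   sig I t u (sig I s t f) = sig I s u f"
  using P_3b[of I] by blast
lemma dci_5: assumes "is_dci I" "(i, j) \<in> sim I" "i \<noteq> j" "f \<in> part I i" "g \<in> part I j"
  shows "{f, g} \<in> excl I"
proof -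
  have "i \<noteq> j \<longrightarrow> (\<forall>f\<in>part I i. \<forall>g\<in>part I j. {f, g} \<in> excl I)"
    using bspec[OF P_5[OF assms(1)] assms(2)] by simp
  thus ?thesis using assms(3,4,5) by simp
qed

lemma sim_idx: "is_dci I \<Longrightarrow> (s, t) \<in> sim I \<Longrightarrow> s \<in> idx I \<and> t \<in> idx I"
  using dci_equiv[of I] unfolding equiv_def refl_on_def by blast
lemma sim_refl: "is_dci I \<Longrightarrow> s \<in> idx I \<Longrightarrow> (s, s) \<in> sim I"
  using dci_equiv[of I] unfolding equiv_def refl_on_def by blast
lemma sim_sym: "is_dci I \<Longrightarrow> (s, t) \<in> sim I \<Longrightarrow> (t, s) \<in> sim I"
  using dci_equiv[of I] unfolding equiv_def sym_def by blast
lemma sim_trans: "is_dci I \<Longrightarrow> (s, t) \<in> sim I \<Longrightarrow> (t, u) \<in> sim I \<Longrightarrow> (s, u) \<in> sim I"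
  using dci_equiv[of I] unfolding equiv_def trans_def by blast

lemma sig_part: "is_dci I \<Longrightarrow> (s, t) \<in> sim I \<Longrightarrow> f \<in> part I s \<Longrightarrow> sig I s t f \<in> part I t"
  using dci_bij[of I s t] unfolding bij_betw_def by blast

lemma sig_id: assumes "is_dci I" "s \<in> idx I" "f \<in> part I s" shows "sig I s s f = f"
proof -
  have r: "(s, s) \<in> sim I" using sim_refl assms by blast
  have "sig I s s (sig I s s f) = sig I s s f" using dci_3b[OF assms(1) r r assms(3)] .
  moreover have "sig I s s f \<in> part I s" using sig_part[OF assms(1) r assms(3)] .
  moreover have "inj_on (sig I s s) (part I s)" using dci_bij[OF assms(1) r] bij_betw_def by blast
  ultimately show ?thesis using assms(3) by (meson inj_on_def)
qed

lemma ext_dom: "is_dci I \<Longrightarrow> ext I C \<subseteq> dom I"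
  by (induction C) (auto dest: dci_cint)

lemma phi_sub: assumes "is_dci I" shows "phi I C \<subseteq> feats I"
proof (cases "ext I C = {}")
  case True thus ?thesis by (simp add: phi_def phiS_def)
next
  case False
  then obtain d where d: "d \<in> ext I C" by blast
  hence "phi I C \<subseteq> pi I d" unfolding phi_def phiS_def by auto
  moreover have "d \<in> dom I" using d ext_dom[OF assms] by (rule subsetD[rotated])
  ultimately show ?thesis using dci_pi[OF assms] by (meson order_trans)
qed

lemma phi_cases: assumes "is_dci I"
  shows "phi I C = feats I \<or> (\<forall>X\<in>excl I. \<not> X \<subseteq> phi I C)"
proof (cases "ext I C = {}")
  case True thus ?thesis by (simp add: phi_def phiS_def)
next
  case False
  then obtain d where d: "d \<in> ext I C" by blast
  hence "phi I C \<subseteq> pi I d" unfolding phi_def phiS_def by auto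
  thus ?thesis using dci_1[OF assms] d ext_dom[OF assms] by blast
qed

lemma in_part: assumes "is_dci I" "f \<in> feats I" obtains s where "s \<in> idx I" "f \<in> part I s"
  using dci_union[OF assms(1)] assms(2) by blast

definition tg :: "(nat \<times> nat) set \<Rightarrow> nat \<Rightarrow> nat" where
  "tg U s = (if \<exists>b. (s, b) \<in> U then (THE b. (s, b) \<in> U) else s)"

lemma tg_in: assumes inj: "inj_on fst U" and sb: "(s, b) \<in> U" shows "tg U s = b"
proof -
  have u: "b' = b" if "(s, b') \<in> U" for b'
    using inj_onD[OF inj _ that sb] by simp
  have "(THE b. (s, b) \<in> U) = b" using sb u by (rule the_equality)
  thus ?thesis unfolding tg_def using sb by auto
qed

lemma tg_notin: "s \<notin> fst ` U \<Longrightarrow> tg U s = s"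
  unfolding tg_def by force

lemma tg_mem: assumes "inj_on fst U" "tg U s \<noteq> s" shows "(s, tg U s) \<in> U"
proof -
  have "s \<in> fst ` U" using assms(2) tg_notin by blast
  then obtain p where p: "p \<in> U" "s = fst p" by blast
  hence "(s, snd p) \<in> U" by simp
  moreover have "tg U s = snd p" using tg_in[OF assms(1) \<open>(s, snd p) \<in> U\<close>] .
  ultimately show ?thesis by simp
qed

lemma tg_sim: assumes "is_dci I" "admissible I U" "s \<in> idx I" shows "(s, tg U s) \<in> sim I"
  using assms tg_mem[of U s] sim_refl[of I s] unfolding admissible_def by (cases "tg U s = s") auto

lemma tg_idx: assumes "is_dci I" "admissible I U" "s \<in> idx I" shows "tg U s \<in> idx I"
  using sim_idx[OF assms(1) tg_sim[OF assms]] by blast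

lemma transl_part: assumes "is_dci I" "admissible I U" "s \<in> idx I" "f \<in> part I s"
  shows "transl I U f = sig I s (tg U s) f"
proof (cases "\<exists>b. (s, b) \<in> U")
  case True
  then obtain b where b: "(s, b) \<in> U" by blast
  have inj: "inj_on fst U" using assms(2) admissible_def by blast
  have ex: "\<exists>p\<in>U. f \<in> part I (fst p)" using b assms(4) by force
  define p where "p = (SOME p. p \<in> U \<and> f \<in> part I (fst p))"
  have p: "p \<in> U \<and> f \<in> part I (fst p)" unfolding p_def by (rule someI_ex) (use ex in blast)
  have "fst p \<in> idx I" using p assms(1,2) sim_idx unfolding admissible_def
    by (metis prod.collapse subsetD)
  hence "fst p = s" using dci_disj[OF assms(1) _ assms(3) _ assms(4)] p by blast
  hence "p = (s, b)" using inj b p by (metis fst_conv inj_onD)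
  thus ?thesis unfolding transl_def using ex p_def tg_in[OF inj b] by (simp add: Let_def)
next
  case False
  have "\<not> (\<exists>p\<in>U. f \<in> part I (fst p))"
  proof
    assume "\<exists>p\<in>U. f \<in> part I (fst p)"
    then obtain p where p: "p \<in> U" "f \<in> part I (fst p)" by blast
    have "fst p \<in> idx I" using p assms(1,2) sim_idx unfolding admissible_def
      by (metis prod.collapse subsetD)
    hence "fst p = s" using dci_disj[OF assms(1) _ assms(3) _ assms(4)] p by blast
    thus False using p False by (metis prod.collapse)
  qed
  moreover have "tg U s = s" using False tg_def by simp
  ultimately show ?thesis unfolding transl_def using sig_id[OF assms(1,3,4)] by simp
qed

lemma transl_out: assumes "is_dci I" "admissible I U" "\<forall>s\<in>idx I. f \<notin> part I s"
  shows "transl I U f = f"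
proof -
  have "\<not> (\<exists>p\<in>U. f \<in> part I (fst p))"
    using assms sim_idx unfolding admissible_def by (metis prod.collapse subsetD)
  thus ?thesis unfolding transl_def by simp
qed

lemma transl_empty: "transl I {} = id"
  unfolding transl_def by auto


definition good where
  "good I U C D \<longleftrightarrow> admissible I U \<and> phi I D = transl I U ` phi I C \<and>
     fst ` U \<subseteq> delta I C \<and> snd ` U \<inter> (delta I C - fst ` U) = {}"

lemma good_adm: "good I U C D \<Longrightarrow> admissible I U" by (simp add: good_def)
lemma good_phi: "good I U C D \<Longrightarrow> phi I D = transl I U ` phi I C" by (simp add: good_def)
lemma good_fst: "good I U C D \<Longrightarrow> fst ` U \<subseteq> delta I C" by (simp add: good_def)
lemma good_snd: "good I U C D \<Longrightarrow> snd ` U \<inter> (delta I C - fst ` U) = {}" by (simp add: good_def)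
lemma goodI: "admissible I U \<Longrightarrow> phi I D = transl I U ` phi I C \<Longrightarrow> fst ` U \<subseteq> delta I C \<Longrightarrow>
   snd ` U \<inter> (delta I C - fst ` U) = {} \<Longrightarrow> good I U C D" by (simp add: good_def)
lemma adm_sim: "admissible I U \<Longrightarrow> U \<subseteq> sim I" by (simp add: admissible_def)
lemma adm_injf: "admissible I U \<Longrightarrow> inj_on fst U" by (simp add: admissible_def)
lemma adm_injs: "admissible I U \<Longrightarrow> inj_on snd U" by (simp add: admissible_def)
lemma admI: "U \<subseteq> sim I \<Longrightarrow> inj_on fst U \<Longrightarrow> inj_on snd U \<Longrightarrow> admissible I U" by (simp add: admissible_def)
lemma deltaI: "s \<in> idx I \<Longrightarrow> f \<in> part I s \<Longrightarrow> f \<in> phi I C \<Longrightarrow> s \<in> delta I C"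
  unfolding delta_def by blast
lemma deltaE: assumes "s \<in> delta I C"
  obtains f where "s \<in> idx I" "f \<in> part I s" "f \<in> phi I C"
  using assms unfolding delta_def by blast

lemma mu_good: "x \<in> mu I C D \<longleftrightarrow> (\<exists>U. x = transl I U \<and> good I U C D)"
  unfolding mu_def good_def by blast

lemma delta_idx: "delta I C \<subseteq> idx I" unfolding delta_def by blast

lemma G1: assumes "good I U C D" "s \<notin> delta I C" shows "tg U s = s"
proof -
  have "s \<notin> fst ` U" using good_fst[OF assms(1)] assms(2) by blast
  thus ?thesis by (rule tg_notin)
qed

lemma G1': "good I U C D \<Longrightarrow> tg U s \<noteq> s \<Longrightarrow> s \<in> delta I C"
  using G1[of I U C D s] by auto

lemma G2: assumes "good I U C D" shows "inj_on (tg U) (delta I C)"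
proof (rule inj_onI)
  fix x y assume x: "x \<in> delta I C" and y: "y \<in> delta I C" and e: "tg U x = tg U y"
  have adm: "admissible I U" and inj: "inj_on fst U" and injs: "inj_on snd U"
    and c: "snd ` U \<inter> (delta I C - fst ` U) = {}"
    using good_adm[OF assms] adm_injf adm_injs good_snd[OF assms] by auto
  show "x = y"
  proof (cases "x \<in> fst ` U"; cases "y \<in> fst ` U")
    assume "x \<in> fst ` U" "y \<in> fst ` U"
    then obtain a b where a: "(x, a) \<in> U" and b: "(y, b) \<in> U" by force
    hence "a = b" using e tg_in[OF inj] by metis
    thus ?thesis using a b injs by (metis inj_onD snd_conv fst_conv)
  next
    assume "x \<in> fst ` U" "y \<notin> fst ` U"
    then obtain a where a: "(x, a) \<in> U" by force
    hence "a = y" using e tg_in[OF inj] tg_notin[of y U] \<open>y \<notin> fst ` U\<close> by metis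
    thus ?thesis using a c y \<open>y \<notin> fst ` U\<close> by force
  next
    assume "x \<notin> fst ` U" "y \<in> fst ` U"
    then obtain a where a: "(y, a) \<in> U" by force
    hence "a = x" using e tg_in[OF inj] tg_notin[of x U] \<open>x \<notin> fst ` U\<close> by metis
    thus ?thesis using a c x \<open>x \<notin> fst ` U\<close> by force
  next
    assume "x \<notin> fst ` U" "y \<notin> fst ` U"
    thus ?thesis using e tg_notin by metis
  qed
qed

lemma G3: assumes "is_dci I" "good I U C D" "s \<in> delta I C" shows "tg U s \<in> delta I D"
proof -
  have adm: "admissible I U" using assms(2) by (rule good_adm)
  obtain f where s: "s \<in> idx I" and f: "f \<in> part I s" "f \<in> phi I C" using assms(3) by (rule deltaE)
  have "transl I U f \<in> phi I D" using f(2) good_phi[OF assms(2)] by blast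
  moreover have "transl I U f \<in> part I (tg U s)"
    using transl_part[OF assms(1) adm s f(1)] sig_part[OF assms(1) tg_sim[OF assms(1) adm s] f(1)] by simp
  ultimately show ?thesis using deltaI[OF tg_idx[OF assms(1) adm s]] by blast
qed

lemma G4: assumes "is_dci I" "good I U C D" "s \<in> delta I D" shows "\<exists>s'\<in>delta I C. tg U s' = s"
proof -
  have adm: "admissible I U" using assms(2) by (rule good_adm)
  obtain g where s: "s \<in> idx I" and g: "g \<in> part I s" "g \<in> phi I D" using assms(3) by (rule deltaE)
  then obtain f where f: "f \<in> phi I C" "g = transl I U f" using good_phi[OF assms(2)] by blast
  obtain s' where s': "s' \<in> idx I" "f \<in> part I s'" using in_part[OF assms(1)] phi_sub[OF assms(1)] f(1) by blast
  have "g \<in> part I (tg U s')"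
    using f transl_part[OF assms(1) adm s'] sig_part[OF assms(1) tg_sim[OF assms(1) adm s'(1)] s'(2)] by simp
  hence "tg U s' = s" using dci_disj[OF assms(1) tg_idx[OF assms(1) adm s'(1)] s] g by blast
  moreover have "s' \<in> delta I C" using deltaI[OF s'(1,2) f(1)] .
  ultimately show ?thesis by blast
qed

lemma TE: assumes "is_dci I" "admissible I U1" "admissible I U2" "transl I U1 = transl I U2" "s \<in> idx I"
  shows "tg U1 s = tg U2 s"
proof -
  obtain f where f: "f \<in> part I s" using dci_parts_ne[OF assms(1,5)] by blast
  have "transl I U1 f \<in> part I (tg U1 s)"
    using transl_part[OF assms(1,2,5) f] sig_part[OF assms(1) tg_sim[OF assms(1,2,5)] f] by simp
  moreover have "transl I U1 f \<in> part I (tg U2 s)" unfolding assms(4)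
    using transl_part[OF assms(1,3,5) f] sig_part[OF assms(1) tg_sim[OF assms(1,3,5)] f] by simp
  ultimately show ?thesis using dci_disj[OF assms(1) tg_idx[OF assms(1,2,5)] tg_idx[OF assms(1,3,5)]] by blast
qed

lemma transl_eqI: assumes "is_dci I" "admissible I U1" "admissible I U2" "\<forall>s\<in>idx I. tg U1 s = tg U2 s"
  shows "transl I U1 = transl I U2"
proof
  fix f
  show "transl I U1 f = transl I U2 f"
  proof (cases "\<exists>s\<in>idx I. f \<in> part I s")
    case True
    then obtain s where "s \<in> idx I" "f \<in> part I s" by blast
    thus ?thesis using transl_part[OF assms(1,2)] transl_part[OF assms(1,3)] assms(4) by metis
  next
    case False thus ?thesis using transl_out[OF assms(1,2)] transl_out[OF assms(1,3)] by metis
  qed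
qed

lemma mu_phi: "phi I C = phi I C' \<Longrightarrow> phi I D = phi I D' \<Longrightarrow> mu I C D = mu I C' D'"
  unfolding mu_def delta_def by simp

lemma good_empty: "phi I D = phi I C \<Longrightarrow> good I {} C D"
  unfolding good_def admissible_def transl_empty by simp


lemma B_half:
  assumes dci: "is_dci I"
    and gU1: "good I U1 C1 C2" and gU2: "good I U2 D1 D2"
    and gV1: "good I V1 C2 C3" and gV2: "good I V2 D2 D3"
    and ts: "\<forall>s\<in>idx I. tg U1 s = ts s \<and> tg U2 s = ts s"
    and tt: "\<forall>s\<in>idx I. tg V1 s = tt s \<and> tg V2 s = tt s"
  shows "good I ((\<lambda>s. (s, tt (ts s))) ` (delta I C1 \<inter> delta I D1)) C1 C3"
proof -
  define A where "A = delta I C1 \<inter> delta I D1"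
  define W where "W = (\<lambda>s. (s, tt (ts s))) ` A"
  have admU1: "admissible I U1" using good_adm[OF gU1] .
  have admV1: "admissible I V1" using good_adm[OF gV1] .
  have dC1: "delta I C1 \<subseteq> idx I" and dC2: "delta I C2 \<subseteq> idx I" and dD1: "delta I D1 \<subseteq> idx I"
    using delta_idx by auto
  have F: "ts s = s \<and> tt s = s" if s: "s \<in> delta I C1" "s \<notin> delta I D1" for s
  proof -
    have si: "s \<in> idx I" using s dC1 by blast
    have t1: "ts s = s" using G1[OF gU2 s(2)] ts si by metis
    have "tt s = s"
    proof (rule ccontr)
      assume "tt s \<noteq> s"
      hence "tg V2 s \<noteq> s" using tt si by metis
      hence "s \<in> delta I D2" using G1'[OF gV2] by blast
      then obtain s'' where s'': "s'' \<in> delta I D1" "tg U2 s'' = s" using G4[OF dci gU2] by blast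
      have "s'' \<noteq> s" using s'' s by blast
      moreover have "tg U1 s'' = s" using s'' ts dD1 by (metis subsetD)
      ultimately have "s'' \<in> delta I C1" using G1'[OF gU1] by metis
      moreover have "tg U1 s = s" using t1 ts si by metis
      ultimately have "s'' = s" using G2[OF gU1] s(1) \<open>tg U1 s'' = s\<close> by (metis inj_onD)
      thus False using \<open>s'' \<noteq> s\<close> by blast
    qed
    thus ?thesis using t1 by blast
  qed
  have inj1: "inj_on ts (delta I C1)"
    using G2[OF gU1] ts dC1 by (smt (verit, best) inj_on_cong subsetD)
  have map1: "ts s \<in> delta I C2" if "s \<in> delta I C1" for s
    using G3[OF dci gU1 that] ts that dC1 by (metis subsetD)
  have inj2: "inj_on tt (delta I C2)"
    using G2[OF gV1] tt dC2 by (smt (verit, best) inj_on_cong subsetD)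
  have injc: "inj_on (\<lambda>s. tt (ts s)) (delta I C1)"
    using inj1 inj2 map1 unfolding inj_on_def by blast
  have simW: "W \<subseteq> sim I"
  proof
    fix p assume "p \<in> W"
    then obtain s where s: "s \<in> A" "p = (s, tt (ts s))" unfolding W_def by blast
    have si: "s \<in> idx I" using s dC1 unfolding A_def by blast
    have a: "(s, ts s) \<in> sim I" using tg_sim[OF dci admU1 si] ts si by metis
    have tsi: "ts s \<in> idx I" using sim_idx[OF dci a] by blast
    have b: "(ts s, tt (ts s)) \<in> sim I" using tg_sim[OF dci admV1 tsi] tt tsi by metis
    show "p \<in> sim I" using sim_trans[OF dci a b] s by simp
  qed
  have injf: "inj_on fst W" unfolding W_def inj_on_def by auto
  have injs: "inj_on snd W" unfolding W_def inj_on_def using injc unfolding A_def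
    by (auto dest: inj_onD)
  have admW: "admissible I W" using simW injf injs by (rule admI)
  have fstW: "fst ` W = A" unfolding W_def by force
  have tgW: "tg W s = tt (ts s)" if "s \<in> A" for s
    using tg_in[OF injf] that unfolding W_def by blast
  have c1: "fst ` W \<subseteq> delta I C1" unfolding fstW A_def by blast
  have c2: "snd ` W \<inter> (delta I C1 - fst ` W) = {}"
  proof (rule ccontr)
    assume "snd ` W \<inter> (delta I C1 - fst ` W) \<noteq> {}"
    then obtain s where s: "s \<in> A" "tt (ts s) \<in> delta I C1" "tt (ts s) \<notin> A"
      unfolding W_def fstW by force
    let ?x = "tt (ts s)"
    have "?x \<notin> delta I D1" using s unfolding A_def by blast
    hence "tt (ts ?x) = ?x" using F s(2) by metis
    moreover have "s \<in> delta I C1" using s(1) unfolding A_def by blast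
    ultimately have "?x = s" using inj_onD[OF injc _ s(2)] by blast
    thus False using s by simp
  qed
  have img: "phi I C3 = transl I W ` phi I C1"
  proof -
    have "phi I C3 = transl I V1 ` transl I U1 ` phi I C1"
      using good_phi[OF gU1] good_phi[OF gV1] by simp
    also have "\<dots> = (\<lambda>f. transl I V1 (transl I U1 f)) ` phi I C1" by (simp add: image_image)
    also have "\<dots> = transl I W ` phi I C1"
    proof (rule image_cong[OF refl])
      fix f assume f: "f \<in> phi I C1"
      obtain s where s: "s \<in> idx I" "f \<in> part I s" using in_part[OF dci] phi_sub[OF dci] f by blast
      have sd: "s \<in> delta I C1" using deltaI[OF s f] .
      have a: "(s, ts s) \<in> sim I" using tg_sim[OF dci admU1 s(1)] ts s(1) by metis
      have tsi: "ts s \<in> idx I" using sim_idx[OF dci a] by blast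
      have b: "(ts s, tt (ts s)) \<in> sim I" using tg_sim[OF dci admV1 tsi] tt tsi by metis
      have u: "transl I U1 f = sig I s (ts s) f" using transl_part[OF dci admU1 s] ts s(1) by metis
      have p: "sig I s (ts s) f \<in> part I (ts s)" using sig_part[OF dci a s(2)] .
      have v: "transl I V1 (transl I U1 f) = sig I s (tt (ts s)) f"
        using u transl_part[OF dci admV1 tsi p] tt tsi dci_3b[OF dci a b s(2)] by metis
      show "transl I V1 (transl I U1 f) = transl I W f"
      proof (cases "s \<in> A")
        case True
        thus ?thesis using v transl_part[OF dci admW s] tgW by metis
      next
        case False
        hence "s \<notin> delta I D1" using sd unfolding A_def by blast
        hence e: "ts s = s" "tt s = s" using F sd by auto
        have "tg W s = s" using tg_notin False fstW by metis
        thus ?thesis using v e transl_part[OF dci admW s] by metis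
      qed
    qed
    finally show ?thesis .
  qed
  show ?thesis using goodI[OF admW img c1 c2] unfolding W_def A_def .
qed

lemma part_b:
  assumes dci: "is_dci I"
    and "mu I C1 C2 \<inter> mu I D1 D2 \<noteq> {}" "mu I C2 C3 \<inter> mu I D2 D3 \<noteq> {}"
  shows "mu I C1 C3 \<inter> mu I D1 D3 \<noteq> {}"
proof -
  obtain U1 U2 where gU1: "good I U1 C1 C2" and gU2: "good I U2 D1 D2" and e1: "transl I U1 = transl I U2"
    using assms(2) mu_good by (metis IntD1 IntD2 ex_in_conv)
  obtain V1 V2 where gV1: "good I V1 C2 C3" and gV2: "good I V2 D2 D3" and e2: "transl I V1 = transl I V2"
    using assms(3) mu_good by (metis IntD1 IntD2 ex_in_conv)
  have ts: "\<forall>s\<in>idx I. tg U1 s = tg U1 s \<and> tg U2 s = tg U1 s"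
    using TE[OF dci good_adm[OF gU1] good_adm[OF gU2] e1] by simp
  have ts': "\<forall>s\<in>idx I. tg U2 s = tg U1 s \<and> tg U1 s = tg U1 s" using ts by metis
  have tt: "\<forall>s\<in>idx I. tg V1 s = tg V1 s \<and> tg V2 s = tg V1 s"
    using TE[OF dci good_adm[OF gV1] good_adm[OF gV2] e2] by simp
  have tt': "\<forall>s\<in>idx I. tg V2 s = tg V1 s \<and> tg V1 s = tg V1 s" using tt by metis
  let ?W = "(\<lambda>s. (s, tg V1 (tg U1 s))) ` (delta I C1 \<inter> delta I D1)"
  have "good I ?W C1 C3" by (rule B_half[OF dci gU1 gU2 gV1 gV2 ts tt])
  moreover have "good I ?W D1 D3"
    using B_half[OF dci gU2 gU1 gV2 gV1 ts' tt'] by (simp add: Int_commute)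
  ultimately show ?thesis using mu_good by blast
qed


lemma delta_full: assumes dci: "is_dci I" "phi I D = feats I" shows "delta I D = idx I"
proof -
  have pf: "part I i \<subseteq> feats I" if "i \<in> idx I" for i using dci_union[OF dci(1)] that by blast
  show ?thesis
  proof
    show "delta I D \<subseteq> idx I" by (rule delta_idx)
    show "idx I \<subseteq> delta I D"
    proof
      fix i assume i: "i \<in> idx I"
      obtain f where f: "f \<in> part I i" using dci_parts_ne[OF dci(1) i] by blast
      have "f \<in> phi I D" using f pf[OF i] assms(2) by blast
      thus "i \<in> delta I D" using deltaI[OF i f] by blast
    qed
  qed
qed

lemma FIX:
  assumes dci: "is_dci I" and gU: "good I U C C'" and gU': "good I U' D D'"
    and e: "transl I U = transl I U'" and pd: "phi I D = feats I"
    and cons: "\<forall>X\<in>excl I. \<not> X \<subseteq> phi I C"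
  shows "phi I C' = phi I C"
proof -
  have adm: "admissible I U" using good_adm[OF gU] .
  have adm': "admissible I U'" using good_adm[OF gU'] .
  have dD: "delta I D = idx I" using delta_full[OF dci pd] .
  have fixp: "transl I U f = f" if f: "f \<in> phi I C" for f
  proof -
    obtain s where s: "s \<in> idx I" "f \<in> part I s" using in_part[OF dci] phi_sub[OF dci] f by blast
    let ?a = "tg U s"
    have tr: "transl I U f = sig I s ?a f" using transl_part[OF dci adm s] .
    show ?thesis
    proof (cases "?a = s")
      case True thus ?thesis using tr sig_id[OF dci s] by simp
    next
      case False
      have sa: "(s, ?a) \<in> sim I" using tg_sim[OF dci adm s(1)] .
      have ai: "?a \<in> idx I" using sim_idx[OF dci sa] by blast
      have "?a \<notin> delta I C"
      proof
        assume "?a \<in> delta I C"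
        then obtain g where g: "g \<in> part I ?a" "g \<in> phi I C" by (rule deltaE)
        have "{f, g} \<in> excl I" using dci_5[OF dci sa False[symmetric] s(2) g(1)] by simp
        moreover have "{f, g} \<subseteq> phi I C" using f g(2) by simp
        ultimately show False using cons by blast
      qed
      hence "tg U ?a = ?a" using G1[OF gU] by blast
      hence "tg U' ?a = ?a" using TE[OF dci adm adm' e ai] by simp
      moreover have "tg U' s = ?a" using TE[OF dci adm adm' e s(1)] by simp
      ultimately have "tg U' s = tg U' ?a" by simp
      hence "s = ?a" using inj_onD[OF G2[OF gU']] dD s(1) ai by blast
      thus ?thesis using False by simp
    qed
  qed
  have "phi I C' = transl I U ` phi I C" using good_phi[OF gU] .
  also have "\<dots> = phi I C" using fixp by (simp add: image_cong)
  finally show ?thesis .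
qed

lemma part_a:
  assumes dci: "is_dci I"
    and "mu I C1 C2 \<inter> mu I D1 D2 \<noteq> {}" "mu I D1 D2 \<inter> mu I E1 E2 \<noteq> {}"
  shows "mu I C1 C2 \<inter> mu I E1 E2 \<noteq> {}"
proof -
  obtain U1 U2 where gU1: "good I U1 C1 C2" and gU2: "good I U2 D1 D2" and e1: "transl I U1 = transl I U2"
    using assms(2) mu_good by (metis IntD1 IntD2 ex_in_conv)
  obtain V1 V2 where gV1: "good I V1 D1 D2" and gV2: "good I V2 E1 E2" and e2: "transl I V1 = transl I V2"
    using assms(3) mu_good by (metis IntD1 IntD2 ex_in_conv)
  have admU1: "admissible I U1" using good_adm[OF gU1] .
  have admU2: "admissible I U2" using good_adm[OF gU2] .
  have admV1: "admissible I V1" using good_adm[OF gV1] .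
  have admV2: "admissible I V2" using good_adm[OF gV2] .
  show ?thesis
  proof (cases "\<forall>s\<in>delta I D1. tg U2 s = tg V1 s")
    case True
    have "\<forall>s\<in>idx I. tg U2 s = tg V1 s"
      using True G1[OF gU2] G1[OF gV1] by metis
    hence "transl I U2 = transl I V1" using transl_eqI[OF dci admU2 admV1] by blast
    hence "transl I U1 = transl I V2" using e1 e2 by simp
    thus ?thesis using gU1 gV2 mu_good by blast
  next
    case False
    then obtain s where s: "s \<in> delta I D1" "tg U2 s \<noteq> tg V1 s" by blast
    have si: "s \<in> idx I" using s delta_idx by blast
    let ?a = "tg U2 s" and ?b = "tg V1 s"
    have ad: "?a \<in> delta I D2" using G3[OF dci gU2 s(1)] .
    have bd: "?b \<in> delta I D2" using G3[OF dci gV1 s(1)] .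
    have ab: "(?a, ?b) \<in> sim I"
      using sim_trans[OF dci sim_sym[OF dci tg_sim[OF dci admU2 si]] tg_sim[OF dci admV1 si]] .
    obtain x where x: "x \<in> part I ?a" "x \<in> phi I D2" using ad by (rule deltaE)
    obtain y where y: "y \<in> part I ?b" "y \<in> phi I D2" using bd by (rule deltaE)
    have "{x, y} \<in> excl I" using dci_5[OF dci ab s(2) x(1) y(1)] .
    moreover have "{x, y} \<subseteq> phi I D2" using x(2) y(2) by simp
    ultimately have pD2: "phi I D2 = feats I" using phi_cases[OF dci, of D2] by blast
    have pD1: "phi I D1 = feats I"
    proof (rule ccontr)
      assume ne: "phi I D1 \<noteq> feats I"
      have fin: "finite (feats I)" using dci_finite[OF dci] .
      have sub: "phi I D1 \<subseteq> feats I" using phi_sub[OF dci] .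
      have "card (phi I D1) < card (feats I)" using psubset_card_mono[OF fin] sub ne by blast
      moreover have "card (phi I D2) \<le> card (phi I D1)"
        using good_phi[OF gU2] card_image_le[OF finite_subset[OF sub fin]] by simp
      ultimately show False using pD2 by simp
    qed
    show ?thesis
    proof (cases "phi I C1 = feats I")
      case True
      have "phi I C2 = transl I U2 ` phi I D1" using good_phi[OF gU1] e1 True pD1 by simp
      hence "phi I C2 = phi I D2" using good_phi[OF gU2] by simp
      hence "mu I C1 C2 = mu I D1 D2" using mu_phi True pD1 by metis
      thus ?thesis using assms(3) by simp
    next
      case nC: False
      show ?thesis
      proof (cases "phi I E1 = feats I")
        case True
        have "phi I E2 = transl I V1 ` phi I D1" using good_phi[OF gV2] e2 True pD1 by simp
        hence "phi I E2 = phi I D2" using good_phi[OF gV1] by simp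
        hence "mu I E1 E2 = mu I D1 D2" using mu_phi True pD1 by metis
        thus ?thesis using assms(2) by (simp add: Int_commute)
      next
        case nE: False
        have cC: "\<forall>X\<in>excl I. \<not> X \<subseteq> phi I C1" using phi_cases[OF dci] nC by blast
        have cE: "\<forall>X\<in>excl I. \<not> X \<subseteq> phi I E1" using phi_cases[OF dci] nE by blast
        have "phi I C2 = phi I C1" using FIX[OF dci gU1 gU2 e1 pD1 cC] .
        hence g1: "good I {} C1 C2" using good_empty by blast
        have "phi I E2 = phi I E1" using FIX[OF dci gV2 gV1 e2[symmetric] pD1 cE] .
        hence g2: "good I {} E1 E2" using good_empty by blast
        show ?thesis using g1 g2 mu_good by blast
      qed
    qed
  qed
qed

lemma final_a:
  fixes NCN :: "'c set" and IR :: "'r set"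
  shows "entails NCN IR {Analogy C1 C2 D1 D2, Analogy D1 D2 E1 E2}
           (Analogy C1 C2 E1 E2) TYPE('d \<times> 'f)"
  unfolding entails_def
proof (intro allI impI)
  fix I :: "('d, 'f, 'c, 'r) dci"
  assume m: "is_model NCN IR {Analogy C1 C2 D1 D2, Analogy D1 D2 E1 E2} I"
  hence d: "is_dci I" and s1: "sat I (Analogy C1 C2 D1 D2)" and s2: "sat I (Analogy D1 D2 E1 E2)"
    unfolding is_model_def by auto
  show "sat I (Analogy C1 C2 E1 E2)" using part_a[OF d] s1 s2 by simp
qed
lemma final_b:
  fixes NCN :: "'c set" and IR :: "'r set"
  shows "entails NCN IR {Analogy C1 C2 D1 D2, Analogy C2 C3 D2 D3}
           (Analogy C1 C3 D1 D3) TYPE('d \<times> 'f)"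
  unfolding entails_def
proof (intro allI impI)
  fix I :: "('d, 'f, 'c, 'r) dci"
  assume m: "is_model NCN IR {Analogy C1 C2 D1 D2, Analogy C2 C3 D2 D3} I"
  hence d: "is_dci I" and s1: "sat I (Analogy C1 C2 D1 D2)" and s2: "sat I (Analogy C2 C3 D2 D3)"
    unfolding is_model_def by auto
  show "sat I (Analogy C1 C3 D1 D3)" using part_b[OF d] s1 s2 by simp
qed

theorem proposition6:
  fixes NCN :: "'c set" and IR :: "'r set"
    and C1 C2 C3 D1 D2 D3 E1 E2 :: "('c, 'r) concept"
  assumes "natural NCN IR C1" "natural NCN IR C2" "natural NCN IR C3"
    and "natural NCN IR D1" "natural NCN IR D2" "natural NCN IR D3"
    and "natural NCN IR E1" "natural NCN IR E2"
  shows "entails NCN IR {Analogy C1 C2 D1 D2, Analogy D1 D2 E1 E2}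
           (Analogy C1 C2 E1 E2) TYPE('d \<times> 'f) \<and>
         entails NCN IR {Analogy C1 C2 D1 D2, Analogy C2 C3 D2 D3}
           (Analogy C1 C3 D1 D3) TYPE('d \<times> 'f)"
  using final_a final_b by blast

end
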